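(* Let $A$ be a generalized ring. Every maximal proper h-ideal of $A$ (a proper h-ideal not strictly contained in any proper h-ideal) is a prime of $A$.
   Context: All sets $X,Y,Z,W$ below are finite. A partial map $f:X\rightharpoonup Y$ is a map $f:D(f)\to Y$ defined on a subset $D(f)\subseteq X$; $f^{-1}(y)\subseteq D(f)$ is its fibre, $Set_\bullet(X,Y)$ is the set of partial maps, composed as partial maps. $\mathbb F_\bullet$ is the category of finite sets with partial bijections as morphisms; $f^t$ is the inverse partial bijection. $[1]=\{1\}$ and $c_X:X\to[1]$ is the total map. A generalized ring $A$ consists of: (1) a functor $X\mapsto A_X$, $f\mapsto f_A$, from $\mathbb F_\bullet$ to pointed sets with $A_\emptyset=\{0\}$; for $f\in Set_\bullet(X,Y)$ put $A_f=\prod_{y\in Y}A_{f^{-1}(y)}$, elements $b=(b^{(y)})_{y}$; so $A_{c_X}=A_X$, and $A_{id_X}$ is identified with $(A_{[1]})^X$ via the unique bijections $[1]\cong\{x\}$. (2) For each $f\in Set_\bullet(X,Y)$ a multiplication $\circ:A_Y\times A_f\to A_X$ and a contraction $(\,,\,):A_X\times A_f\to A_Y$, both giving $0$ when an argument is $0$. For $g\in Set_\bullet(Y,Z)$ these extend fibrewise to $\circ:A_g\times A_f\to A_{g\circ f}$ and $(\,,\,):A_{g\circ f}\times A_f\to A_g$ by $(a\circ b)^{(z)}=a^{(z)}\circ b|_z$, $(c,b)^{(z)}=(c^{(z)},b|_z)$, where $b|_z=(b^{(y)})_{y\in g^{-1}(z)}\in A_{f|_z}$ for the restriction $f|_z:(g\circ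 f)^{-1}(z)\rightharpoonup g^{-1}(z)$. (3) A unit $1\in A_{[1]}$; $1_x\in A_{\{x\}}$ is its transport, and for a partial bijection $f$, $1_f\in A_f$ has components $1_{f^t(y)}$ on the image of $f$ and $0$ otherwise. Axioms, for all partial maps $W\xleftarrow{h}Z\xleftarrow{g}Y\xleftarrow{f}X$: $d\circ(c\circ b)=(d\circ c)\circ b$ ($d\in A_h,c\in A_g,b\in A_f$); $(d,a\circ c)=((d,c),a)$ ($d\in A_{h\circ g\circ f},a\in A_g,c\in A_f$); $(d\circ c,a)=(d,(a,c))$ ($d\in A_{h\circ g},a\in A_{g\circ f},c\in A_f$); $(d\circ a,c)=d\circ(a,c)$ ($d\in A_h,a\in A_{g\circ f},c\in A_f$); right linearity: for $Z\xrightarrow{g}Y\xleftarrow{f}X$, $h\in Set_\bullet(Y,W)$, $P=\{(z,x)\in D(g)\times D(f):g(z)=f(x)\}$ with projections $\tilde f:P\to Z$, $\tilde g:P\to X$, $\tilde c^{(z)}=c^{(g(z))}$ ($\tilde c\in A_{\tilde f}$), $\tilde a^{(x)}=a^{(f(x))}$ ($\tilde a\in A_{\tilde g}$): $(d,c)\circ a=(d\circ\tilde a,\tilde c)$ for $d\in A_{h\circ f},a\in A_g,c\in A_f$; unit: $a\circ 1_{id_X}=1_{id_Y}\circ a=(a,1_{id_X})=a$ for $a\in A_f$, and $a\circ 1_{f^t}=(a,1_f)=f_A(a)$ for $a\in A_X$ and partial bijections $f:X\to Y$. $A_{[1]}$ is a commutative monoid under $\circ$; we have $(\,,\,):A_X\times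 A_X\to A_{[1]}$ and $\circ:A_X\times (A_{[1]})^X\to A_X$. An h-ideal of $A$ is a subset $\mathfrak a\subseteq A_{[1]}$ with $(b\circ c,d)\in\mathfrak a$ for all finite $X$, $b,d\in A_X$, $c\in\mathfrak a^X$. It is proper if $1\notin\mathfrak a$. A prime is a proper h-ideal $\mathfrak p$ such that for $a,b\in A_{[1]}$, $a\circ b\in\mathfrak p$ implies $a\in\mathfrak p$ or $b\in\mathfrak p$. *)

theory Defs
  imports Main "HOL-Library.Nat_Bijection"
begin

text \<open>Finite sets are modelled as finite subsets of nat; partial maps X \<rightharpoonup> Y as
  maps nat \<Rightarrow> nat option with domain in X and range in Y.  The one-point set [1] is {1}.
  All the sets A_X are modelled inside one carrier type 'a.\<close>

type_synonym pmap = "nat \<Rightarrow> nat option"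

definition is_pmap :: "nat set \<Rightarrow> nat set \<Rightarrow> pmap \<Rightarrow> bool" where
  "is_pmap X Y f \<longleftrightarrow> dom f \<subseteq> X \<and> ran f \<subseteq> Y"

definition is_pbij :: "nat set \<Rightarrow> nat set \<Rightarrow> pmap \<Rightarrow> bool" where
  "is_pbij X Y f \<longleftrightarrow> is_pmap X Y f \<and> inj_on f (dom f)"

definition fib :: "pmap \<Rightarrow> nat \<Rightarrow> nat set" where
  "fib f y = {x. f x = Some y}"

definition pinv :: "pmap \<Rightarrow> pmap" where
  "pinv f = (\<lambda>y. if y \<in> ran f then Some (THE x. f x = Some y) else None)"

definition idm :: "nat set \<Rightarrow> pmap" where
  "idm X = (\<lambda>x. if x \<in> X then Some x else None)"

definition cmap :: "nat set \<Rightarrow> pmap" where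
  "cmap X = (\<lambda>x. if x \<in> X then Some 1 else None)"

definition sgl :: "nat \<Rightarrow> pmap" where
  "sgl x = (\<lambda>t. if t = 1 then Some x else None)"

record 'a gring =
  gcar :: "nat set \<Rightarrow> 'a set"
  gzero :: "nat set \<Rightarrow> 'a"
  gmap :: "nat set \<Rightarrow> nat set \<Rightarrow> pmap \<Rightarrow> 'a \<Rightarrow> 'a"
  gmul :: "nat set \<Rightarrow> nat set \<Rightarrow> pmap \<Rightarrow> 'a \<Rightarrow> (nat \<Rightarrow> 'a) \<Rightarrow> 'a" (* A_Y \<times> A_f \<rightarrow> A_X *)
  gcon :: "nat set \<Rightarrow> nat set \<Rightarrow> pmap \<Rightarrow> 'a \<Rightarrow> (nat \<Rightarrow> 'a) \<Rightarrow> 'a" (* A_X \<times> A_f \<rightarrow> A_Y *)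
  gone :: 'a

text \<open>A_f for f : X \<rightharpoonup> Y, as extensional families over Y\<close>
definition Af :: "'a gring \<Rightarrow> nat set \<Rightarrow> pmap \<Rightarrow> (nat \<Rightarrow> 'a) set" where
  "Af R Y f = {b. (\<forall>y\<in>Y. b y \<in> gcar R (fib f y)) \<and> (\<forall>y. y \<notin> Y \<longrightarrow> b y = undefined)}"

definition zf :: "'a gring \<Rightarrow> nat set \<Rightarrow> pmap \<Rightarrow> (nat \<Rightarrow> 'a)" where
  "zf R Y f = (\<lambda>y. if y \<in> Y then gzero R (fib f y) else undefined)"

text \<open>identification A_X = A_{c_X}\<close>
definition ofX :: "'a \<Rightarrow> nat \<Rightarrow> 'a" where
  "ofX a = (\<lambda>t. if t = 1 then a else undefined)"

text \<open>identification (A_[1])^X = A_{id_X}\<close>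
definition embed :: "'a gring \<Rightarrow> nat set \<Rightarrow> (nat \<Rightarrow> 'a) \<Rightarrow> (nat \<Rightarrow> 'a)" where
  "embed R X c = (\<lambda>x. if x \<in> X then gmap R {1} {x} (sgl x) (c x) else undefined)"

definition unit_at :: "'a gring \<Rightarrow> nat \<Rightarrow> 'a" where
  "unit_at R x = gmap R {1} {x} (sgl x) (gone R)"

definition unitf :: "'a gring \<Rightarrow> nat set \<Rightarrow> pmap \<Rightarrow> (nat \<Rightarrow> 'a)" where
  "unitf R Y f = (\<lambda>y. if y \<in> Y then (if y \<in> ran f then unit_at R (the (pinv f y)) else gzero R {})
                     else undefined)"

text \<open>fibrewise extensions: for f : X \<rightharpoonup> Y, g : Y \<rightharpoonup> Z,
  mulE : A_g \<times> A_f \<rightarrow> A_{g\<circ>f},  conE : A_{g\<circ>f} \<times> A_f \<rightarrow> A_g\<close>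
definition mulE :: "'a gring \<Rightarrow> nat set \<Rightarrow> pmap \<Rightarrow> pmap \<Rightarrow> (nat \<Rightarrow> 'a) \<Rightarrow> (nat \<Rightarrow> 'a) \<Rightarrow> (nat \<Rightarrow> 'a)" where
  "mulE R Z g f a b = (\<lambda>z. if z \<in> Z then
      gmul R (fib (g \<circ>\<^sub>m f) z) (fib g z) (f |` fib (g \<circ>\<^sub>m f) z) (a z)
             (\<lambda>y. if y \<in> fib g z then b y else undefined)
    else undefined)"

definition conE :: "'a gring \<Rightarrow> nat set \<Rightarrow> pmap \<Rightarrow> pmap \<Rightarrow> (nat \<Rightarrow> 'a) \<Rightarrow> (nat \<Rightarrow> 'a) \<Rightarrow> (nat \<Rightarrow> 'a)" where
  "conE R Z g f c b = (\<lambda>z. if z \<in> Z then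
      gcon R (fib (g \<circ>\<^sub>m f) z) (fib g z) (f |` fib (g \<circ>\<^sub>m f) z) (c z)
             (\<lambda>y. if y \<in> fib g z then b y else undefined)
    else undefined)"

text \<open>pullback P of Z -g-> Y <-f- X, encoded into nat via prod_encode,
  with projections f~ : P \<rightarrow> Z (prj1) and g~ : P \<rightarrow> X (prj2)\<close>
definition pbP :: "pmap \<Rightarrow> pmap \<Rightarrow> nat set" where
  "pbP g f = {prod_encode (z, x) | z x. z \<in> dom g \<and> x \<in> dom f \<and> g z = f x}"

definition prj1 :: "pmap \<Rightarrow> pmap \<Rightarrow> pmap" where
  "prj1 g f = (\<lambda>p. if p \<in> pbP g f then Some (fst (prod_decode p)) else None)"

definition prj2 :: "pmap \<Rightarrow> pmap \<Rightarrow> pmap" where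
  "prj2 g f = (\<lambda>p. if p \<in> pbP g f then Some (snd (prod_decode p)) else None)"

text \<open>c~ \<in> A_{f~}: c~^(z) = c^(g z), transported along f^{-1}(g z) \<cong> f~^{-1}(z)\<close>
definition ctil :: "'a gring \<Rightarrow> nat set \<Rightarrow> pmap \<Rightarrow> pmap \<Rightarrow> (nat \<Rightarrow> 'a) \<Rightarrow> (nat \<Rightarrow> 'a)" where
  "ctil R Z g f c = (\<lambda>z. if z \<in> Z then
      (if z \<in> dom g then
         gmap R (fib f (the (g z))) (fib (prj1 g f) z)
           (\<lambda>x. if x \<in> fib f (the (g z)) then Some (prod_encode (z, x)) else None)
           (c (the (g z)))
       else gzero R {})
    else undefined)"

text \<open>a~ \<in> A_{g~}: a~^(x) = a^(f x), transported along g^{-1}(f x) \<cong> g~^{-1}(x)\<close>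
definition atil :: "'a gring \<Rightarrow> nat set \<Rightarrow> pmap \<Rightarrow> pmap \<Rightarrow> (nat \<Rightarrow> 'a) \<Rightarrow> (nat \<Rightarrow> 'a)" where
  "atil R X g f a = (\<lambda>x. if x \<in> X then
      (if x \<in> dom f then
         gmap R (fib g (the (f x))) (fib (prj2 g f) x)
           (\<lambda>z. if z \<in> fib g (the (f x)) then Some (prod_encode (z, x)) else None)
           (a (the (f x)))
       else gzero R {})
    else undefined)"

definition gr_functor :: "'a gring \<Rightarrow> bool" where
  "gr_functor R \<longleftrightarrow>
     (\<forall>X. finite X \<longrightarrow> gzero R X \<in> gcar R X) \<and>
     gcar R {} = {gzero R {}} \<and>
     (\<forall>X Y f a. finite X \<and> finite Y \<and> is_pbij X Y f \<and> a \<in> gcar R X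
        \<longrightarrow> gmap R X Y f a \<in> gcar R Y) \<and>
     (\<forall>X Y f. finite X \<and> finite Y \<and> is_pbij X Y f \<longrightarrow> gmap R X Y f (gzero R X) = gzero R Y) \<and>
     (\<forall>X a. finite X \<and> a \<in> gcar R X \<longrightarrow> gmap R X X (idm X) a = a) \<and>
     (\<forall>X Y Z f g a. finite X \<and> finite Y \<and> finite Z \<and> is_pbij X Y f \<and> is_pbij Y Z g \<and> a \<in> gcar R X
        \<longrightarrow> gmap R X Z (g \<circ>\<^sub>m f) a = gmap R Y Z g (gmap R X Y f a))"

definition gr_ops :: "'a gring \<Rightarrow> bool" where
  "gr_ops R \<longleftrightarrow>
     (\<forall>X Y f a b. finite X \<and> finite Y \<and> is_pmap X Y f \<and> a \<in> gcar R Y \<and> b \<in> Af R Y f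
        \<longrightarrow> gmul R X Y f a b \<in> gcar R X \<and>
            ((a = gzero R Y \<or> b = zf R Y f) \<longrightarrow> gmul R X Y f a b = gzero R X)) \<and>
     (\<forall>X Y f c b. finite X \<and> finite Y \<and> is_pmap X Y f \<and> c \<in> gcar R X \<and> b \<in> Af R Y f
        \<longrightarrow> gcon R X Y f c b \<in> gcar R Y \<and>
            ((c = gzero R X \<or> b = zf R Y f) \<longrightarrow> gcon R X Y f c b = gzero R Y)) \<and>
     gone R \<in> gcar R {1}"

definition gr_axioms :: "'a gring \<Rightarrow> bool" where
  "gr_axioms R \<longleftrightarrow>
     (\<forall>W Z Y X h g f. finite W \<and> finite Z \<and> finite Y \<and> finite X \<and>
        is_pmap X Y f \<and> is_pmap Y Z g \<and> is_pmap Z W h \<longrightarrow>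
        (\<forall>d\<in>Af R W h. \<forall>c\<in>Af R Z g. \<forall>b\<in>Af R Y f.
           mulE R W h (g \<circ>\<^sub>m f) d (mulE R Z g f c b) = mulE R W (h \<circ>\<^sub>m g) f (mulE R W h g d c) b) \<and>
        (\<forall>d\<in>Af R W ((h \<circ>\<^sub>m g) \<circ>\<^sub>m f). \<forall>a\<in>Af R Z g. \<forall>c\<in>Af R Y f.
           conE R W h (g \<circ>\<^sub>m f) d (mulE R Z g f a c) = conE R W h g (conE R W (h \<circ>\<^sub>m g) f d c) a) \<and>
        (\<forall>d\<in>Af R W (h \<circ>\<^sub>m g). \<forall>a\<in>Af R Z (g \<circ>\<^sub>m f). \<forall>c\<in>Af R Y f.
           conE R W h (g \<circ>\<^sub>m f) (mulE R W (h \<circ>\<^sub>m g) f d c) a = conE R W h g d (conE R Z g f a c)) \<and>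
        (\<forall>d\<in>Af R W h. \<forall>a\<in>Af R Z (g \<circ>\<^sub>m f). \<forall>c\<in>Af R Y f.
           conE R W (h \<circ>\<^sub>m g) f (mulE R W h (g \<circ>\<^sub>m f) d a) c = mulE R W h g d (conE R Z g f a c))) \<and>
     \<comment> \<open>right linearity: Z -g-> Y <-f- X, h : Y \<rightharpoonup> W\<close>
     (\<forall>X Y Z W g f h. finite X \<and> finite Y \<and> finite Z \<and> finite W \<and>
        is_pmap Z Y g \<and> is_pmap X Y f \<and> is_pmap Y W h \<longrightarrow>
        (\<forall>d\<in>Af R W (h \<circ>\<^sub>m f). \<forall>a\<in>Af R Y g. \<forall>c\<in>Af R Y f.
           mulE R W h g (conE R W h f d c) a =
           conE R W (h \<circ>\<^sub>m g) (prj1 g f)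
             (mulE R W (h \<circ>\<^sub>m f) (prj2 g f) d (atil R X g f a)) (ctil R Z g f c))) \<and>
     \<comment> \<open>unit axioms\<close>
     (\<forall>X Y f. finite X \<and> finite Y \<and> is_pmap X Y f \<longrightarrow>
        (\<forall>a\<in>Af R Y f.
           mulE R Y f (idm X) a (unitf R X (idm X)) = a \<and>
           mulE R Y (idm Y) f (unitf R Y (idm Y)) a = a \<and>
           conE R Y f (idm X) a (unitf R X (idm X)) = a)) \<and>
     (\<forall>X Y f. finite X \<and> finite Y \<and> is_pbij X Y f \<longrightarrow>
        (\<forall>a\<in>gcar R X.
           gmul R Y X (pinv f) a (unitf R X (pinv f)) = gmap R X Y f a \<and>
           gcon R X Y f a (unitf R Y f) = gmap R X Y f a))"

definition generalized_ring :: "'a gring \<Rightarrow> bool" where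
  "generalized_ring R \<longleftrightarrow> gr_functor R \<and> gr_ops R \<and> gr_axioms R"

text \<open>h-ideals: (b \<circ> c, d) \<in> \<aa> for b, d \<in> A_X, c \<in> \<aa>^X\<close>
definition h_ideal :: "'a gring \<Rightarrow> 'a set \<Rightarrow> bool" where
  "h_ideal R I \<longleftrightarrow> I \<subseteq> gcar R {1} \<and>
     (\<forall>X b d c. finite X \<and> b \<in> gcar R X \<and> d \<in> gcar R X \<and> (\<forall>x\<in>X. c x \<in> I) \<longrightarrow>
        gcon R X {1} (cmap X) (gmul R X X (idm X) b (embed R X c)) (ofX d) \<in> I)"

definition proper_h_ideal :: "'a gring \<Rightarrow> 'a set \<Rightarrow> bool" where
  "proper_h_ideal R I \<longleftrightarrow> h_ideal R I \<and> gone R \<notin> I"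

definition maximal_h_ideal :: "'a gring \<Rightarrow> 'a set \<Rightarrow> bool" where
  "maximal_h_ideal R I \<longleftrightarrow> proper_h_ideal R I \<and>
     (\<forall>J. proper_h_ideal R J \<and> I \<subseteq> J \<longrightarrow> J = I)"

definition mul1 :: "'a gring \<Rightarrow> 'a \<Rightarrow> 'a \<Rightarrow> 'a" where
  "mul1 R a b = gmul R {1} {1} (idm {1}) a (embed R {1} (\<lambda>_. b))"

definition prime_h_ideal :: "'a gring \<Rightarrow> 'a set \<Rightarrow> bool" where
  "prime_h_ideal R P \<longleftrightarrow> proper_h_ideal R P \<and>
     (\<forall>a\<in>gcar R {1}. \<forall>b\<in>gcar R {1}. mul1 R a b \<in> P \<longrightarrow> a \<in> P \<or> b \<in> P)"

end

theory Submission
  imports Defs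
begin
declare One_nat_def [simp del]

lemma pinv_eq: "inj_on f (dom f) \<Longrightarrow> f x = Some y \<Longrightarrow> pinv f y = Some x"
proof -
  assume i: "inj_on f (dom f)" and fx: "f x = Some y"
  have "y \<in> ran f" using fx by (auto simp: ran_def)
  moreover have "(THE x. f x = Some y) = x"
    using i fx unfolding inj_on_def by (metis (mono_tags, lifting) domI the_equality)
  ultimately show ?thesis by (simp add: pinv_def)
qed

definition kk :: "nat \<Rightarrow> pmap" where "kk w = (\<lambda>x. if x = w then Some 1 else None)"

lemma sgl_pbij: "is_pbij {1} {w} (sgl w)"
  by (auto simp: is_pbij_def is_pmap_def sgl_def ran_def dom_def split: if_splits intro: inj_onI)

lemma pinv_sgl: "pinv (sgl w) = kk w"
proof
  fix y show "pinv (sgl w) y = kk w y"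
  proof (cases "y = w")
    case True
    then show ?thesis using pinv_eq[of "sgl w" 1 w] sgl_pbij[of w]
      by (simp add: is_pbij_def sgl_def kk_def)
  next
    case False
    then show ?thesis by (auto simp: pinv_def kk_def ran_def sgl_def)
  qed
qed

lemma kk_inj: "inj_on (kk w) (dom (kk w))"
  by (auto simp: kk_def dom_def intro: inj_onI split: if_splits)

lemma unitf_kk: "unitf R {1} (kk w) = ofX (unit_at R w)"
proof
  fix y show "unitf R {1} (kk w) y = ofX (unit_at R w) y"
  proof -
    have p: "pinv (kk w) 1 = Some w" by (rule pinv_eq[OF kk_inj]) (simp add: kk_def)
    have r: "1 \<in> ran (kk w)" by (auto simp: kk_def ran_def)
    show ?thesis using p r by (simp add: unitf_def ofX_def)
  qed
qed

lemma sgl1: "sgl 1 = idm {1}"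
  by (auto simp: sgl_def idm_def)

lemma cmap1: "cmap {1} = idm {1}"
  by (auto simp: cmap_def idm_def)

lemma fib_idm: "fib (idm X) y = (if y \<in> X then {y} else {})"
  by (auto simp: fib_def idm_def split: if_splits)

lemma fib_cmap: "fib (cmap X) y = (if y = 1 then X else {})"
  by (auto simp: fib_def cmap_def split: if_splits)

lemma fib_cmap1: "fib (cmap X) 1 = X"
  by (auto simp: fib_def cmap_def split: if_splits)

lemma fib_kk: "fib (kk w) y = (if y = 1 then {w} else {})"
  by (auto simp: fib_def kk_def split: if_splits)

lemma gmap_sgl1: "b \<in> gcar R {1} \<Longrightarrow> gr_functor R \<Longrightarrow> gmap R {1} {1} (sgl 1) b = b"
  unfolding sgl1 by (simp add: gr_functor_def)

lemma embed1: "b \<in> gcar R {1} \<Longrightarrow> gr_functor R \<Longrightarrow> embed R {1} (\<lambda>_. b) = ofX b"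
  unfolding embed_def ofX_def using gmap_sgl1[of b R] by (auto intro!: ext)

lemma gr_F: "generalized_ring R \<Longrightarrow> gr_functor R" by (simp add: generalized_ring_def)
lemma gr_O: "generalized_ring R \<Longrightarrow> gr_ops R" by (simp add: generalized_ring_def)
lemma gr_A: "generalized_ring R \<Longrightarrow> gr_axioms R" by (simp add: generalized_ring_def)

lemma gmap_car: "generalized_ring R \<Longrightarrow> finite X \<Longrightarrow> finite Y \<Longrightarrow> is_pbij X Y f
  \<Longrightarrow> a \<in> gcar R X \<Longrightarrow> gmap R X Y f a \<in> gcar R Y"
  apply (drule gr_F) unfolding gr_functor_def apply (drule conjunct2, drule conjunct2, drule conjunct1) by blast

lemma gone_car: "generalized_ring R \<Longrightarrow> gone R \<in> gcar R {1}"
  apply (drule gr_O) unfolding gr_ops_def by (drule conjunct2, drule conjunct2) assumption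

lemma gmul_car: "generalized_ring R \<Longrightarrow> finite X \<Longrightarrow> finite Y \<Longrightarrow> is_pmap X Y f
  \<Longrightarrow> a \<in> gcar R Y \<Longrightarrow> b \<in> Af R Y f \<Longrightarrow> gmul R X Y f a b \<in> gcar R X"
  apply (drule gr_O) unfolding gr_ops_def apply (drule conjunct1) by blast

lemma gcon_car: "generalized_ring R \<Longrightarrow> finite X \<Longrightarrow> finite Y \<Longrightarrow> is_pmap X Y f
  \<Longrightarrow> c \<in> gcar R X \<Longrightarrow> b \<in> Af R Y f \<Longrightarrow> gcon R X Y f c b \<in> gcar R Y"
  apply (drule gr_O) unfolding gr_ops_def apply (drule conjunct2, drule conjunct1) by blast

lemma unit_at_car: "generalized_ring R \<Longrightarrow> unit_at R w \<in> gcar R {w}"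
  unfolding unit_at_def by (rule gmap_car) (auto simp: sgl_pbij gone_car)

lemma unit_at1: "generalized_ring R \<Longrightarrow> unit_at R 1 = gone R"
  unfolding unit_at_def using gmap_sgl1[OF gone_car gr_F] by blast

lemma ax_trans: "generalized_ring R \<Longrightarrow> (\<forall>X Y f. finite X \<and> finite Y \<and> is_pbij X Y f \<longrightarrow>
        (\<forall>a\<in>gcar R X.
           gmul R Y X (pinv f) a (unitf R X (pinv f)) = gmap R X Y f a \<and>
           gcon R X Y f a (unitf R Y f) = gmap R X Y f a))"
  apply (drule gr_A) unfolding gr_axioms_def
  apply (drule conjunct2, drule conjunct2, drule conjunct2) by assumption

lemma ax_unit: "generalized_ring R \<Longrightarrow> (\<forall>X Y f. finite X \<and> finite Y \<and> is_pmap X Y f \<longrightarrow>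
        (\<forall>a\<in>Af R Y f.
           mulE R Y f (idm X) a (unitf R X (idm X)) = a \<and>
           mulE R Y (idm Y) f (unitf R Y (idm Y)) a = a \<and>
           conE R Y f (idm X) a (unitf R X (idm X)) = a))"
  apply (drule gr_A) unfolding gr_axioms_def
  apply (drule conjunct2, drule conjunct2, drule conjunct1) by assumption

lemma trans_mul: "generalized_ring R \<Longrightarrow> finite X \<Longrightarrow> finite Y \<Longrightarrow> is_pbij X Y f
  \<Longrightarrow> a \<in> gcar R X \<Longrightarrow> gmul R Y X (pinv f) a (unitf R X (pinv f)) = gmap R X Y f a"
  using ax_trans by blast

lemma trans_con: "generalized_ring R \<Longrightarrow> finite X \<Longrightarrow> finite Y \<Longrightarrow> is_pbij X Y f
  \<Longrightarrow> a \<in> gcar R X \<Longrightarrow> gcon R X Y f a (unitf R Y f) = gmap R X Y f a"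
  using ax_trans by blast

lemma trans_sgl: "generalized_ring R \<Longrightarrow> a \<in> gcar R {1} \<Longrightarrow>
  gmap R {1} {w} (sgl w) a = gmul R {w} {1} (kk w) a (ofX (unit_at R w))"
  using trans_mul[of R "{1}" "{w}" "sgl w" a] by (simp add: sgl_pbij pinv_sgl unitf_kk)

lemma idm_pbij: "is_pbij X X (idm X)"
  by (auto simp: is_pbij_def is_pmap_def idm_def ran_def dom_def split: if_splits intro: inj_onI)

lemma pinv_idm: "pinv (idm X) = idm X"
proof
  fix y show "pinv (idm X) y = idm X y"
  proof (cases "y \<in> X")
    case True
    then show ?thesis using pinv_eq[of "idm X" y y] idm_pbij[of X]
      by (simp add: is_pbij_def idm_def)
  next
    case False
    then show ?thesis by (auto simp: pinv_def idm_def ran_def)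
  qed
qed

lemma unitf_idm1: "generalized_ring R \<Longrightarrow> unitf R {1} (idm {1}) = ofX (gone R)"
proof
  assume g: "generalized_ring R"
  fix y show "unitf R {1} (idm {1}) y = ofX (gone R) y"
    using pinv_idm[of "{1}"] unit_at1[OF g] by (auto simp: unitf_def ofX_def idm_def ran_def)
qed

lemma left_unit: assumes g: "generalized_ring R" and "finite X" "finite Y" "is_pmap X Y f"
  "a \<in> Af R Y f" "y \<in> Y"
shows "gmul R (fib f y) {y} (f |` fib f y) (unit_at R y) (\<lambda>y'. if y' = y then a y' else undefined) = a y"
proof -
  have "mulE R Y (idm Y) f (unitf R Y (idm Y)) a = a"
    using ax_unit[OF g] assms by blast
  then have e: "mulE R Y (idm Y) f (unitf R Y (idm Y)) a y = a y" by simp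
  have c: "idm Y \<circ>\<^sub>m f = f" using assms(4)
    by (fastforce simp: is_pmap_def idm_def map_comp_def ran_def split: option.splits intro!: ext)
  have u: "unitf R Y (idm Y) y = unit_at R y" using assms(6) pinv_idm[of Y]
    by (auto simp: unitf_def idm_def ran_def)
  show ?thesis using e assms(6) unfolding mulE_def c u fib_idm by simp
qed

lemma ax_assoc: "generalized_ring R \<Longrightarrow> finite W \<Longrightarrow> finite Z \<Longrightarrow> finite Y \<Longrightarrow> finite X \<Longrightarrow>
        is_pmap X Y f \<Longrightarrow> is_pmap Y Z g \<Longrightarrow> is_pmap Z W h \<Longrightarrow>
        d\<in>Af R W h \<Longrightarrow> c\<in>Af R Z g \<Longrightarrow> b\<in>Af R Y f \<Longrightarrow>
           mulE R W h (g \<circ>\<^sub>m f) d (mulE R Z g f c b) = mulE R W (h \<circ>\<^sub>m g) f (mulE R W h g d c) b"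
  apply (drule gr_A) unfolding gr_axioms_def apply (drule conjunct1)
  apply (drule spec[of _ W], drule spec[of _ Z], drule spec[of _ Y], drule spec[of _ X])
  apply (drule spec[of _ h], drule spec[of _ g], drule spec[of _ f])
  apply (drule mp, simp)
  apply (drule conjunct1)
  apply (drule bspec[of _ _ d], assumption)
  apply (drule bspec[of _ _ c], assumption)
  apply (drule bspec[of _ _ b], assumption)
  by assumption

lemma mulE1: "mulE R {1} h g a c = ofX (gmul R (fib (h \<circ>\<^sub>m g) 1) (fib h 1) (g |` fib (h \<circ>\<^sub>m g) 1) (a 1)
   (\<lambda>y. if y \<in> fib h 1 then c y else undefined))"
  by (auto simp: mulE_def ofX_def intro!: ext)

lemma conE1: "conE R {1} h g a c = ofX (gcon R (fib (h \<circ>\<^sub>m g) 1) (fib h 1) (g |` fib (h \<circ>\<^sub>m g) 1) (a 1)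
   (\<lambda>y. if y \<in> fib h 1 then c y else undefined))"
  by (auto simp: conE_def ofX_def intro!: ext)

lemma ofX_inj: "ofX a = ofX b \<Longrightarrow> a = b"
  by (metis ofX_def)

lemma ofX_1[simp]: "ofX a 1 = a" by (simp add: ofX_def)

lemma fib_cmap_comp: "ran h \<subseteq> Z \<Longrightarrow> fib (cmap Z \<circ>\<^sub>m h) 1 = dom h"
  by (auto simp: fib_def cmap_def map_comp_def ran_def split: option.splits)

lemma restr_dom: "dom h \<subseteq> A \<Longrightarrow> h |` A = h"
  unfolding restrict_map_def by (rule ext) (metis domIff subsetD)

lemma Af_fam: "c \<in> Af R Y f \<Longrightarrow> (\<lambda>y. if y \<in> Y then c y else undefined) = c"
  by (auto simp: Af_def intro!: ext)

lemma mulE_fam: "(\<lambda>y. if y \<in> Y then mulE R Y g f c b y else undefined) = mulE R Y g f c b"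
  by (auto simp: mulE_def intro!: ext)

lemma ofX_Af: "a \<in> gcar R (fib f 1) \<Longrightarrow> ofX a \<in> Af R {1} f"
  by (auto simp: Af_def ofX_def)

lemma mcomp_assoc: "(h \<circ>\<^sub>m g) \<circ>\<^sub>m f = h \<circ>\<^sub>m (g \<circ>\<^sub>m f)"
  by (rule ext) (simp add: map_comp_def split: option.splits)

lemma dom_comp: "ran f \<subseteq> dom g \<Longrightarrow> dom (g \<circ>\<^sub>m f) = dom f"
  by (auto simp: map_comp_def dom_def ran_def split: option.splits)

lemma ran_comp: "ran (g \<circ>\<^sub>m f) \<subseteq> ran g"
  by (auto simp: map_comp_def ran_def split: option.splits)

lemma cmap_pmap: "is_pmap X {1} (cmap X)" by (auto simp: is_pmap_def cmap_def ran_def dom_def split: if_splits)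
lemma dom_cmap: "dom (cmap X) = X" by (auto simp: cmap_def dom_def)

lemma assoc1: assumes gr: "generalized_ring R" and fin: "finite X" "finite Y" "finite Z"
  and pm: "is_pmap X Y f" "is_pmap Y Z g" and dm: "dom f = X" "dom g = Y"
  and mem: "d \<in> gcar R Z" "c \<in> Af R Z g" "b \<in> Af R Y f"
shows "gmul R X Z (g \<circ>\<^sub>m f) d (mulE R Z g f c b) = gmul R X Y f (gmul R Y Z g d c) b"
proof -
  have dA: "ofX d \<in> Af R {1} (cmap Z)" by (rule ofX_Af) (simp add: fib_cmap mem)
  have e: "mulE R {1} (cmap Z) (g \<circ>\<^sub>m f) (ofX d) (mulE R Z g f c b) =
     mulE R {1} (cmap Z \<circ>\<^sub>m g) f (mulE R {1} (cmap Z) g (ofX d) c) b"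
    by (rule ax_assoc[OF gr _ fin(3) fin(2) fin(1) pm cmap_pmap dA mem(2) mem(3)]) simp
  have rf: "ran f \<subseteq> Y" "ran g \<subseteq> Z" using pm by (auto simp: is_pmap_def)
  have d1: "dom (g \<circ>\<^sub>m f) = X" using rf dm by (simp add: dom_comp)
  have r1: "ran (g \<circ>\<^sub>m f) \<subseteq> Z" by (rule order_trans[OF ran_comp rf(2)])
  have f1: "fib (cmap Z \<circ>\<^sub>m (g \<circ>\<^sub>m f)) 1 = X" using fib_cmap_comp[OF r1] d1 by simp
  have f2: "fib (cmap Z \<circ>\<^sub>m g) 1 = Y" using fib_cmap_comp[OF rf(2)] dm by simp
  have f3: "fib ((cmap Z \<circ>\<^sub>m g) \<circ>\<^sub>m f) 1 = X"
    using f1 by (simp add: mcomp_assoc)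
  have x1: "(g \<circ>\<^sub>m f) |` X = g \<circ>\<^sub>m f" using d1 by (simp add: restr_dom)
  have x2: "g |` Y = g" using dm by (simp add: restr_dom)
  have x3: "f |` X = f" using dm by (simp add: restr_dom)
  note e2 = e[unfolded mulE1, THEN ofX_inj]
  show ?thesis using e2 unfolding f1 f2 f3 x1 x2 x3 fib_cmap1 ofX_1 Af_fam[OF mem(2)] Af_fam[OF mem(3)] mulE_fam .
qed

definition pt :: "nat \<Rightarrow> nat \<Rightarrow> pmap" where "pt q z = (\<lambda>x. if x = q then Some z else None)"

lemma pt_pmap: "is_pmap {q} {z} (pt q z)" by (auto simp: is_pmap_def pt_def ran_def dom_def split: if_splits)
lemma kk_pmap: "is_pmap {z} {1} (kk z)" by (auto simp: is_pmap_def kk_def ran_def dom_def split: if_splits)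
lemma dom_pt: "dom (pt q z) = {q}" by (auto simp: pt_def dom_def)
lemma dom_kk: "dom (kk z) = {z}" by (auto simp: kk_def dom_def)
lemma fib_pt: "fib (pt q z) z = {q}" by (auto simp: fib_def pt_def split: if_splits)
lemma kk_pt: "kk z \<circ>\<^sub>m pt q z = kk q" by (rule ext) (simp add: map_comp_def kk_def pt_def)
lemma idm_kk: "idm {1} \<circ>\<^sub>m kk q = kk q" by (rule ext) (simp add: map_comp_def kk_def idm_def)
lemma fib_kk1: "fib (kk w) 1 = {w}" by (auto simp: fib_def kk_def split: if_splits)
lemma fib_idm1: "fib (idm X) x = {x}" if "x \<in> X" using that by (auto simp: fib_def idm_def split: if_splits)
lemma restr_pt: "pt q z |` {q} = pt q z" by (rule restr_dom) (simp add: dom_pt)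
lemma restr_kk: "kk q |` {q} = kk q" by (rule restr_dom) (simp add: dom_kk)
lemma idm_pmap: "is_pmap X X (idm X)" using idm_pbij by (simp add: is_pbij_def)
lemma dom_idm: "dom (idm X) = X" by (auto simp: idm_def dom_def)

lemma mul1_eq: "generalized_ring R \<Longrightarrow> t \<in> gcar R {1} \<Longrightarrow> mul1 R c t = gmul R {1} {1} (idm {1}) c (ofX t)"
  unfolding mul1_def by (simp add: embed1 gr_F)

lemma ofX_Af_idm: "t \<in> gcar R {1} \<Longrightarrow> ofX t \<in> Af R {1} (idm {1})"
  by (rule ofX_Af) (simp add: fib_idm1)

lemma mul1_car: "generalized_ring R \<Longrightarrow> c \<in> gcar R {1} \<Longrightarrow> t \<in> gcar R {1} \<Longrightarrow> mul1 R c t \<in> gcar R {1}"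
  unfolding mul1_eq by (rule gmul_car) (auto simp: idm_pmap ofX_Af_idm)

lemma natur: assumes gr: "generalized_ring R" and c: "c \<in> gcar R {1}" and t: "t \<in> gcar R {1}"
  shows "gmul R {q} {z} (pt q z) (gmap R {1} {z} (sgl z) c) (\<lambda>y. if y = z then gmap R {1} {q} (sgl q) t else undefined)
     = gmap R {1} {q} (sgl q) (mul1 R c t)"
proof -
  define tq where "tq = gmap R {1} {q} (sgl q) t"
  define T where "T = (\<lambda>y. if y = z then tq else undefined)"
  have tqc: "tq \<in> gcar R {q}" unfolding tq_def by (rule gmap_car[OF gr]) (auto simp: sgl_pbij t)
  have TA: "T \<in> Af R {z} (pt q z)" using tqc by (auto simp: Af_def T_def fib_pt)
  have uA: "ofX (unit_at R z) \<in> Af R {1} (kk z)" by (rule ofX_Af) (simp add: fib_kk1 unit_at_car[OF gr])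
  have A: "gmul R {q} {1} (kk z \<circ>\<^sub>m pt q z) c (mulE R {1} (kk z) (pt q z) (ofX (unit_at R z)) T)
     = gmul R {q} {z} (pt q z) (gmul R {z} {1} (kk z) c (ofX (unit_at R z))) T"
    by (rule assoc1[OF gr _ _ _ pt_pmap kk_pmap dom_pt dom_kk c uA TA]) auto
  have lu: "gmul R (fib (pt q z) z) {z} (pt q z |` fib (pt q z) z) (unit_at R z) (\<lambda>y'. if y' = z then T y' else undefined) = T z"
    by (rule left_unit[OF gr _ _ pt_pmap TA]) auto
  have Tf: "(\<lambda>y'. if y' = z then T y' else undefined) = T" by (auto simp: T_def)
  have m1: "mulE R {1} (kk z) (pt q z) (ofX (unit_at R z)) T = ofX tq"
  proof -
    have Tz: "T z = tq" by (simp add: T_def)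
    show ?thesis unfolding mulE1 kk_pt fib_kk1 fib_pt restr_pt using lu[unfolded fib_pt restr_pt Tf Tz]
      by (simp add: Tf)
  qed
  have A2: "gmul R {q} {1} (kk q) c (ofX tq) = gmul R {q} {z} (pt q z) (gmap R {1} {z} (sgl z) c) T"
    using A unfolding m1 kk_pt trans_sgl[OF gr c] .
  have uqA: "ofX (unit_at R q) \<in> Af R {1} (kk q)" by (rule ofX_Af) (simp add: fib_kk1 unit_at_car[OF gr])
  have B: "gmul R {q} {1} (idm {1} \<circ>\<^sub>m kk q) c (mulE R {1} (idm {1}) (kk q) (ofX t) (ofX (unit_at R q)))
     = gmul R {q} {1} (kk q) (gmul R {1} {1} (idm {1}) c (ofX t)) (ofX (unit_at R q))"
    by (rule assoc1[OF gr _ _ _ kk_pmap idm_pmap dom_kk dom_idm c ofX_Af_idm[OF t] uqA]) auto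
  have fam1: "(\<lambda>y. if y \<in> {1} then ofX a y else undefined) = ofX a" for a
    by (auto simp: ofX_def)
  have m2: "mulE R {1} (idm {1}) (kk q) (ofX t) (ofX (unit_at R q)) = ofX tq"
    unfolding mulE1 idm_kk fib_kk1 fib_idm1[of 1 "{1}", simplified] restr_kk fam1 ofX_1
    using trans_sgl[OF gr t, of q] by (simp add: tq_def)
  have B2: "gmul R {q} {1} (kk q) c (ofX tq) = gmap R {1} {q} (sgl q) (mul1 R c t)"
    using B unfolding m2 idm_kk mul1_eq[OF gr t, symmetric] trans_sgl[OF gr mul1_car[OF gr c t]] .
  show ?thesis using A2 B2 unfolding T_def tq_def by simp
qed


lemma ax_tower: "generalized_ring R \<Longrightarrow> finite W \<Longrightarrow> finite Z \<Longrightarrow> finite Y \<Longrightarrow> finite X \<Longrightarrow>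
        is_pmap X Y f \<Longrightarrow> is_pmap Y Z g \<Longrightarrow> is_pmap Z W h \<Longrightarrow>
        (\<forall>d\<in>Af R W h. \<forall>c\<in>Af R Z g. \<forall>b\<in>Af R Y f.
           mulE R W h (g \<circ>\<^sub>m f) d (mulE R Z g f c b) = mulE R W (h \<circ>\<^sub>m g) f (mulE R W h g d c) b) \<and>
        (\<forall>d\<in>Af R W ((h \<circ>\<^sub>m g) \<circ>\<^sub>m f). \<forall>a\<in>Af R Z g. \<forall>c\<in>Af R Y f.
           conE R W h (g \<circ>\<^sub>m f) d (mulE R Z g f a c) = conE R W h g (conE R W (h \<circ>\<^sub>m g) f d c) a) \<and>
        (\<forall>d\<in>Af R W (h \<circ>\<^sub>m g). \<forall>a\<in>Af R Z (g \<circ>\<^sub>m f). \<forall>c\<in>Af R Y f.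
           conE R W h (g \<circ>\<^sub>m f) (mulE R W (h \<circ>\<^sub>m g) f d c) a = conE R W h g d (conE R Z g f a c)) \<and>
        (\<forall>d\<in>Af R W h. \<forall>a\<in>Af R Z (g \<circ>\<^sub>m f). \<forall>c\<in>Af R Y f.
           conE R W (h \<circ>\<^sub>m g) f (mulE R W h (g \<circ>\<^sub>m f) d a) c = mulE R W h g d (conE R Z g f a c))"
  apply (drule gr_A) unfolding gr_axioms_def apply (drule conjunct1)
  apply (drule spec[of _ W], drule spec[of _ Z], drule spec[of _ Y], drule spec[of _ X])
  apply (drule spec[of _ h], drule spec[of _ g], drule spec[of _ f])
  apply (drule mp, simp)
  by assumption

lemma fin1: "finite {1::nat}" by simp
lemma idm1_comp: "idm {1} \<circ>\<^sub>m idm {1} = idm {1}" by (rule ext) (simp add: map_comp_def idm_def)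
lemma fib_idm11: "fib (idm {1}) 1 = {1}" by (simp add: fib_idm1)
lemma restr_idm1: "idm {1} |` {1} = idm {1}" by (rule restr_dom) (simp add: dom_idm)
lemma fam1: "(\<lambda>y. if y \<in> {1} then ofX a y else undefined) = ofX a" by (auto simp: ofX_def)

lemma mul1_ofX: "mulE R {1} (idm {1}) (idm {1}) (ofX a) (ofX b) = ofX (gmul R {1} {1} (idm {1}) a (ofX b))"
  unfolding mulE1 idm1_comp fib_idm11 restr_idm1 fam1 ofX_1 ..
lemma con1_ofX: "conE R {1} (idm {1}) (idm {1}) (ofX a) (ofX b) = ofX (gcon R {1} {1} (idm {1}) a (ofX b))"
  unfolding conE1 idm1_comp fib_idm11 restr_idm1 fam1 ofX_1 ..

lemma gmap_idm: "generalized_ring R \<Longrightarrow> finite X \<Longrightarrow> a \<in> gcar R X \<Longrightarrow> gmap R X X (idm X) a = a"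
  apply (drule gr_F) unfolding gr_functor_def by blast

lemma mul1_one_left: assumes gr: "generalized_ring R" and x: "x \<in> gcar R {1}"
  shows "mul1 R (gone R) x = x"
proof -
  have "gmul R (fib (idm {1}) 1) {1} (idm {1} |` fib (idm {1}) 1) (unit_at R 1) (\<lambda>y'. if y' = 1 then ofX x y' else undefined) = ofX x 1"
    by (rule left_unit[OF gr _ _ idm_pmap ofX_Af_idm[OF x]]) auto
  moreover have "(\<lambda>y'. if y' = 1 then ofX x y' else undefined) = ofX x" by (auto simp: ofX_def)
  ultimately show ?thesis unfolding mul1_eq[OF gr x] fib_idm11 restr_idm1 unit_at1[OF gr] by simp
qed

lemma mul1_one_right: assumes gr: "generalized_ring R" and x: "x \<in> gcar R {1}"
  shows "mul1 R x (gone R) = x"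
  using trans_mul[OF gr _ _ idm_pbij x] gmap_idm[OF gr _ x]
  unfolding mul1_eq[OF gr gone_car[OF gr]] pinv_idm unitf_idm1[OF gr] by simp

lemma con1_one: assumes gr: "generalized_ring R" and x: "x \<in> gcar R {1}"
  shows "gcon R {1} {1} (idm {1}) x (ofX (gone R)) = x"
  using trans_con[OF gr _ _ idm_pbij x] gmap_idm[OF gr _ x] unfolding unitf_idm1[OF gr] by simp

definition phi :: "'a gring \<Rightarrow> 'a \<Rightarrow> 'a" where "phi R w = gcon R {1} {1} (idm {1}) (gone R) (ofX w)"

lemma phi_car: "generalized_ring R \<Longrightarrow> w \<in> gcar R {1} \<Longrightarrow> phi R w \<in> gcar R {1}"
  unfolding phi_def by (rule gcon_car) (auto simp: idm_pmap ofX_Af_idm gone_car)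

lemma ax4_1: assumes gr: "generalized_ring R" and x: "x \<in> gcar R {1}" and w: "w \<in> gcar R {1}"
  shows "gcon R {1} {1} (idm {1}) x (ofX w) = mul1 R x (phi R w)"
proof -
  have "conE R {1} (idm {1} \<circ>\<^sub>m idm {1}) (idm {1}) (mulE R {1} (idm {1}) (idm {1} \<circ>\<^sub>m idm {1}) (ofX x) (ofX (gone R))) (ofX w)
     = mulE R {1} (idm {1}) (idm {1}) (ofX x) (conE R {1} (idm {1}) (idm {1}) (ofX (gone R)) (ofX w))"
    using ax_tower[OF gr fin1 fin1 fin1 fin1 idm_pmap idm_pmap idm_pmap, THEN conjunct2, THEN conjunct2, THEN conjunct2,
      unfolded idm1_comp, THEN bspec, THEN bspec, THEN bspec, OF ofX_Af_idm[OF x] ofX_Af_idm[OF gone_car[OF gr]] ofX_Af_idm[OF w]]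
    unfolding idm1_comp .
  then show ?thesis unfolding idm1_comp mul1_ofX con1_ofX
    mul1_eq[OF gr gone_car[OF gr], symmetric] mul1_one_right[OF gr x]
    mul1_eq[OF gr phi_car[OF gr w], symmetric] phi_def[symmetric] by (rule ofX_inj)
qed

lemma ax3_1: assumes gr: "generalized_ring R" and y: "y \<in> gcar R {1}"
  shows "phi R (phi R y) = y"
proof -
  have "conE R {1} (idm {1}) (idm {1} \<circ>\<^sub>m idm {1}) (mulE R {1} (idm {1} \<circ>\<^sub>m idm {1}) (idm {1}) (ofX (gone R)) (ofX y)) (ofX (gone R))
     = conE R {1} (idm {1}) (idm {1}) (ofX (gone R)) (conE R {1} (idm {1}) (idm {1}) (ofX (gone R)) (ofX y))"
    using ax_tower[OF gr fin1 fin1 fin1 fin1 idm_pmap idm_pmap idm_pmap, THEN conjunct2, THEN conjunct2, THEN conjunct1,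
      unfolded idm1_comp, THEN bspec, THEN bspec, THEN bspec, OF ofX_Af_idm[OF gone_car[OF gr]] ofX_Af_idm[OF gone_car[OF gr]] ofX_Af_idm[OF y]]
    unfolding idm1_comp .
  then have "gcon R {1} {1} (idm {1}) (mul1 R (gone R) y) (ofX (gone R)) = phi R (phi R y)"
    unfolding idm1_comp mul1_ofX con1_ofX mul1_eq[OF gr y, symmetric] phi_def[symmetric]
    by (rule ofX_inj)
  then show ?thesis using mul1_one_left[OF gr y] con1_one[OF gr y] by simp
qed

lemma mul1_as_con: assumes gr: "generalized_ring R" and x: "x \<in> gcar R {1}" and y: "y \<in> gcar R {1}"
  shows "mul1 R x y = gcon R {1} {1} (idm {1}) x (ofX (phi R y))"
  using ax4_1[OF gr x phi_car[OF gr y]] ax3_1[OF gr y] by simp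


definition pe :: "nat \<Rightarrow> nat" where "pe x = prod_encode (1, x)"
definition PP :: "nat set \<Rightarrow> nat set" where "PP X = pe ` X"

lemma pe_inj: "pe x = pe y \<longleftrightarrow> x = y" by (auto simp: pe_def dest: inj_onD[OF inj_prod_encode])
lemma pe_dec: "snd (prod_decode (pe x)) = x" "fst (prod_decode (pe x)) = 1" by (simp_all add: pe_def)

lemma pbP_eq: "pbP (idm {1}) (cmap X) = PP X"
  unfolding pbP_def PP_def pe_def by (auto simp: idm_def cmap_def dom_def split: if_splits)

lemma PP_fin: "finite X \<Longrightarrow> finite (PP X)" by (simp add: PP_def)

lemma prj1_eq: "prj1 (idm {1}) (cmap X) = cmap (PP X)"
  unfolding prj1_def pbP_eq by (rule ext) (auto simp: cmap_def PP_def pe_dec)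

definition pr2 :: "nat set \<Rightarrow> pmap" where "pr2 X = (\<lambda>p. if p \<in> PP X then Some (snd (prod_decode p)) else None)"

lemma prj2_eq: "prj2 (idm {1}) (cmap X) = pr2 X"
  unfolding prj2_def pbP_eq pr2_def ..

lemma pr2_pe: "x \<in> X \<Longrightarrow> pr2 X (pe x) = Some x" by (simp add: pr2_def PP_def pe_dec)

lemma fib_pr2: "x \<in> X \<Longrightarrow> fib (pr2 X) x = {pe x}"
  by (auto simp: fib_def pr2_def PP_def pe_dec pe_inj split: if_splits)

lemma dom_pr2: "dom (pr2 X) = PP X" by (auto simp: pr2_def dom_def)
lemma ran_pr2: "ran (pr2 X) \<subseteq> X" by (auto simp: pr2_def ran_def PP_def pe_dec split: if_splits)
lemma pr2_pmap: "is_pmap (PP X) X (pr2 X)" using dom_pr2 ran_pr2 by (simp add: is_pmap_def)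
lemma pr2_inj: "inj_on (pr2 X) (dom (pr2 X))"
  unfolding inj_on_def dom_pr2 PP_def pr2_def by (auto simp: pe_dec)

lemma restr_pr2: "x \<in> X \<Longrightarrow> pr2 X |` {pe x} = pt (pe x) x"
  by (rule ext) (simp add: restrict_map_def pt_def pr2_pe)

lemma cmap_pr2: "cmap X \<circ>\<^sub>m pr2 X = cmap (PP X)"
  by (rule ext) (auto simp: map_comp_def cmap_def pr2_def PP_def pe_dec)

lemma idm_cmap: "idm {1} \<circ>\<^sub>m cmap X = cmap X" by (rule ext) (simp add: map_comp_def cmap_def idm_def)
lemma idm_cmap2: "idm X \<circ>\<^sub>m pr2 X = pr2 X"
  by (rule ext) (auto simp: map_comp_def idm_def pr2_def PP_def pe_dec)
lemma pr2_idm: "pr2 X \<circ>\<^sub>m idm (PP X) = pr2 X"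
  by (rule ext) (auto simp: map_comp_def idm_def pr2_def)

lemma restr_cmap: "cmap X |` X = cmap X" by (rule restr_dom) (simp add: dom_cmap)

definition tau :: "nat set \<Rightarrow> pmap" where "tau X = (\<lambda>x. if x \<in> X then Some (pe x) else None)"
lemma tau_pbij: "is_pbij X (PP X) (tau X)"
  by (auto simp: is_pbij_def is_pmap_def tau_def dom_def ran_def PP_def pe_inj inj_on_def split: if_splits)

lemma atil_eq: "atil R X (idm {1}) (cmap X) (ofX t) = (\<lambda>x. if x \<in> X then gmap R {1} {pe x} (sgl (pe x)) t else undefined)"
proof (rule ext)
  fix x show "atil R X (idm {1}) (cmap X) (ofX t) x = (if x \<in> X then gmap R {1} {pe x} (sgl (pe x)) t else undefined)"
  proof (cases "x \<in> X")
    case True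
    have m: "(\<lambda>z. if z = 1 then Some (prod_encode (z, x)) else None) = sgl (pe x)"
      by (rule ext) (simp add: sgl_def pe_def)
    have "x \<in> dom (cmap X)" using True by (simp add: dom_cmap)
    moreover have "the (cmap X x) = 1" using True by (simp add: cmap_def)
    ultimately show ?thesis using True unfolding atil_def prj2_eq fib_pr2[OF True] by (simp add: m fib_idm11)
  next
    case False then show ?thesis by (simp add: atil_def)
  qed
qed

lemma ctil_eq: "ctil R {1} (idm {1}) (cmap X) (ofX d) = ofX (gmap R X (PP X) (tau X) d)"
proof (rule ext)
  fix z show "ctil R {1} (idm {1}) (cmap X) (ofX d) z = ofX (gmap R X (PP X) (tau X) d) z"
  proof (cases "z = 1")
    case True
    have m: "(\<lambda>x. if x \<in> fib (cmap X) 1 then Some (prod_encode (1, x)) else None) = tau X"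
      by (rule ext) (simp add: tau_def pe_def fib_cmap1)
    have "(1::nat) \<in> dom (idm {1})" by (simp add: dom_idm)
    moreover have "the (idm {1} 1) = (1::nat)" by (simp add: idm_def)
    ultimately show ?thesis unfolding True ctil_def prj1_eq by (simp add: m[unfolded fib_cmap1] fib_cmap1)
  next
    case False then show ?thesis by (simp add: ctil_def ofX_def)
  qed
qed


lemma ax_rl: "generalized_ring R \<Longrightarrow> finite X \<Longrightarrow> finite Y \<Longrightarrow> finite Z \<Longrightarrow> finite W \<Longrightarrow>
        is_pmap Z Y g \<Longrightarrow> is_pmap X Y f \<Longrightarrow> is_pmap Y W h \<Longrightarrow>
        d\<in>Af R W (h \<circ>\<^sub>m f) \<Longrightarrow> a\<in>Af R Y g \<Longrightarrow> c\<in>Af R Y f \<Longrightarrow>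
           mulE R W h g (conE R W h f d c) a =
           conE R W (h \<circ>\<^sub>m g) (prj1 g f)
             (mulE R W (h \<circ>\<^sub>m f) (prj2 g f) d (atil R X g f a)) (ctil R Z g f c)"
  apply (drule gr_A) unfolding gr_axioms_def apply (drule conjunct2, drule conjunct1)
  apply (drule spec[of _ X], drule spec[of _ Y], drule spec[of _ Z], drule spec[of _ W])
  apply (drule spec[of _ g], drule spec[of _ f], drule spec[of _ h])
  apply (drule mp, simp)
  apply (drule bspec[of _ _ d], assumption)
  apply (drule bspec[of _ _ a], assumption)
  apply (drule bspec[of _ _ c], assumption)
  by assumption

definition atX :: "'a gring \<Rightarrow> nat set \<Rightarrow> 'a \<Rightarrow> nat \<Rightarrow> 'a" where
  "atX R X t = (\<lambda>x. if x \<in> X then gmap R {1} {pe x} (sgl (pe x)) t else undefined)"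

lemma rl_inst: assumes gr: "generalized_ring R" and fX: "finite X" and e: "e \<in> gcar R X"
  and d: "d \<in> gcar R X" and t: "t \<in> gcar R {1}"
shows "mul1 R (gcon R X {1} (cmap X) e (ofX d)) t =
  gcon R (PP X) {1} (cmap (PP X)) (gmul R (PP X) X (pr2 X) e (atX R X t)) (ofX (gmap R X (PP X) (tau X) d))"
proof -
  have eA: "ofX e \<in> Af R {1} (idm {1} \<circ>\<^sub>m cmap X)" unfolding idm_cmap by (rule ofX_Af) (simp add: fib_cmap1 e)
  have dA: "ofX d \<in> Af R {1} (cmap X)" by (rule ofX_Af) (simp add: fib_cmap1 d)
  have E: "mulE R {1} (idm {1}) (idm {1}) (conE R {1} (idm {1}) (cmap X) (ofX e) (ofX d)) (ofX t) =
           conE R {1} (idm {1} \<circ>\<^sub>m idm {1}) (prj1 (idm {1}) (cmap X))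
             (mulE R {1} (idm {1} \<circ>\<^sub>m cmap X) (prj2 (idm {1}) (cmap X)) (ofX e) (atil R X (idm {1}) (cmap X) (ofX t)))
             (ctil R {1} (idm {1}) (cmap X) (ofX d))"
    by (rule ax_rl[OF gr fX fin1 fin1 fin1 idm_pmap cmap_pmap idm_pmap eA ofX_Af_idm[OF t] dA])
  have c1: "conE R {1} (idm {1}) (cmap X) (ofX e) (ofX d) = ofX (gcon R X {1} (cmap X) e (ofX d))"
    unfolding conE1 idm_cmap fib_cmap1 fib_idm11 restr_cmap fam1 ofX_1 ..
  have at: "(\<lambda>y. if y \<in> X then atX R X t y else undefined) = atX R X t" by (auto simp: atX_def)
  have r2: "pr2 X |` PP X = pr2 X" by (rule restr_dom) (simp add: dom_pr2)
  have m2: "mulE R {1} (cmap X) (pr2 X) (ofX e) (atX R X t) = ofX (gmul R (PP X) X (pr2 X) e (atX R X t))"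
    unfolding mulE1 cmap_pr2 fib_cmap1 r2 at ofX_1 ..
  have c2: "conE R {1} (idm {1}) (cmap (PP X)) (ofX a) (ofX b) = ofX (gcon R (PP X) {1} (cmap (PP X)) a (ofX b))" for a b
    unfolding conE1 idm_cmap fib_cmap1 fib_idm11 restr_cmap fam1 ofX_1 ..
  show ?thesis using E unfolding c1 mul1_ofX idm1_comp prj1_eq prj2_eq idm_cmap atil_eq atX_def[symmetric] m2 ctil_eq c2
    mul1_eq[OF gr t, symmetric] by (rule ofX_inj)
qed


lemma embed_Af: assumes gr: "generalized_ring R" and c: "\<forall>x\<in>X. c x \<in> gcar R {1}"
  shows "embed R X c \<in> Af R X (idm X)"
  using c by (auto simp: Af_def embed_def fib_idm1 intro!: gmap_car[OF gr] sgl_pbij)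

lemma atX_Af: assumes gr: "generalized_ring R" and t: "t \<in> gcar R {1}"
  shows "atX R X t \<in> Af R X (pr2 X)"
  using t by (auto simp: Af_def atX_def fib_pr2 intro!: gmap_car[OF gr] sgl_pbij)

lemma unitf_pr2: "x \<in> X \<Longrightarrow> unitf R X (pr2 X) x = unit_at R (pe x)"
proof -
  assume x: "x \<in> X"
  have "pinv (pr2 X) x = Some (pe x)" by (rule pinv_eq[OF pr2_inj pr2_pe[OF x]])
  moreover have "x \<in> ran (pr2 X)" using pr2_pe[OF x] by (auto simp: ran_def)
  ultimately show ?thesis using x by (simp add: unitf_def)
qed

lemma unitf_pr2_Af: assumes gr: "generalized_ring R" shows "unitf R X (pr2 X) \<in> Af R X (pr2 X)"
  by (auto simp: Af_def unitf_pr2 fib_pr2 unit_at_car[OF gr]) (simp add: unitf_def)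

lemma left_unit1: assumes gr: "generalized_ring R" and w: "w \<in> gcar R {q}"
  shows "gmul R {q} {q} (idm {q}) (unit_at R q) (\<lambda>y. if y = q then w else undefined) = w"
proof -
  have A: "(\<lambda>y. if y = q then w else undefined) \<in> Af R {q} (idm {q})" using w by (auto simp: Af_def fib_idm1)
  have "gmul R (fib (idm {q}) q) {q} (idm {q} |` fib (idm {q}) q) (unit_at R q)
     (\<lambda>y'. if y' = q then (\<lambda>y. if y = q then w else undefined) y' else undefined) = (\<lambda>y. if y = q then w else undefined) q"
    by (rule left_unit[OF gr _ _ idm_pmap A]) auto
  moreover have "idm {q} |` {q} = idm {q}" by (rule restr_dom) (simp add: dom_idm)
  moreover have "(\<lambda>y'. if y' = q then (\<lambda>y. if y = q then w else undefined) y' else undefined) = (\<lambda>y. if y = q then w else undefined)"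
    by (rule ext) simp
  ultimately show ?thesis by (simp add: fib_idm1)
qed

definition cpr :: "'a gring \<Rightarrow> (nat \<Rightarrow> 'a) \<Rightarrow> 'a \<Rightarrow> nat \<Rightarrow> 'a" where
  "cpr R c t = (\<lambda>p. mul1 R (c (snd (prod_decode p))) t)"

lemma S4: assumes gr: "generalized_ring R" and c: "\<forall>x\<in>X. c x \<in> gcar R {1}" and t: "t \<in> gcar R {1}"
  shows "mulE R X (pr2 X) (idm (PP X)) (unitf R X (pr2 X)) (embed R (PP X) (cpr R c t)) =
         mulE R X (idm X) (pr2 X) (embed R X c) (atX R X t)"
proof (rule ext)
  fix x show "mulE R X (pr2 X) (idm (PP X)) (unitf R X (pr2 X)) (embed R (PP X) (cpr R c t)) x =
         mulE R X (idm X) (pr2 X) (embed R X c) (atX R X t) x"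
  proof (cases "x \<in> X")
    case False then show ?thesis by (simp add: mulE_def)
  next
    case True
    have pP: "pe x \<in> PP X" using True by (simp add: PP_def)
    have ri: "idm (PP X) |` {pe x} = idm {pe x}" by (rule ext) (auto simp: restrict_map_def idm_def pP)
    have cx: "c x \<in> gcar R {1}" using c True by blast
    have wc: "gmap R {1} {pe x} (sgl (pe x)) (mul1 R (c x) t) \<in> gcar R {pe x}"
      by (rule gmap_car[OF gr]) (auto simp: sgl_pbij mul1_car[OF gr cx t])
    have fam: "(\<lambda>y. if y \<in> {pe x} then embed R (PP X) (cpr R c t) y else undefined)
       = (\<lambda>y. if y = pe x then gmap R {1} {pe x} (sgl (pe x)) (mul1 R (c x) t) else undefined)"
      by (rule ext) (simp add: embed_def pP cpr_def pe_dec)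
    have L: "mulE R X (pr2 X) (idm (PP X)) (unitf R X (pr2 X)) (embed R (PP X) (cpr R c t)) x =
       gmap R {1} {pe x} (sgl (pe x)) (mul1 R (c x) t)"
      unfolding mulE_def pr2_idm fib_pr2[OF True] ri unitf_pr2[OF True] fam
      using True left_unit1[OF gr wc] by simp
    have Rr: "mulE R X (idm X) (pr2 X) (embed R X c) (atX R X t) x = gmap R {1} {pe x} (sgl (pe x)) (mul1 R (c x) t)"
    proof -
      have "(\<lambda>y. if y = x then atX R X t y else undefined) = (\<lambda>y. if y = x then gmap R {1} {pe x} (sgl (pe x)) t else undefined)"
        by (rule ext) (simp add: atX_def True)
      then show ?thesis
      unfolding mulE_def idm_cmap2 fib_pr2[OF True] fib_idm1[OF True] restr_pr2[OF True]
      using True natur[OF gr cx t, of "pe x" x] by (simp add: embed_def)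
    qed
    show ?thesis using L Rr by simp
  qed
qed


lemma cpr_car: assumes gr: "generalized_ring R" and c: "\<forall>x\<in>X. c x \<in> gcar R {1}" and t: "t \<in> gcar R {1}"
  shows "\<forall>p\<in>PP X. cpr R c t p \<in> gcar R {1}"
  using c by (auto simp: PP_def cpr_def pe_dec intro: mul1_car[OF gr _ t])

lemma key: assumes gr: "generalized_ring R" and fX: "finite X" and b: "b \<in> gcar R X" and d: "d \<in> gcar R X"
  and c: "\<forall>x\<in>X. c x \<in> gcar R {1}" and t: "t \<in> gcar R {1}"
shows "mul1 R (gcon R X {1} (cmap X) (gmul R X X (idm X) b (embed R X c)) (ofX d)) t =
 gcon R (PP X) {1} (cmap (PP X)) (gmul R (PP X) (PP X) (idm (PP X)) (gmul R (PP X) X (pr2 X) b (unitf R X (pr2 X)))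
   (embed R (PP X) (cpr R c t))) (ofX (gmap R X (PP X) (tau X) d))"
proof -
  have e: "gmul R X X (idm X) b (embed R X c) \<in> gcar R X"
    by (rule gmul_car[OF gr fX fX idm_pmap b embed_Af[OF gr c]])
  have S2: "gmul R (PP X) X (idm X \<circ>\<^sub>m pr2 X) b (mulE R X (idm X) (pr2 X) (embed R X c) (atX R X t))
     = gmul R (PP X) X (pr2 X) (gmul R X X (idm X) b (embed R X c)) (atX R X t)"
    by (rule assoc1[OF gr PP_fin[OF fX] fX fX pr2_pmap idm_pmap dom_pr2 dom_idm b embed_Af[OF gr c] atX_Af[OF gr t]])
  have S3: "gmul R (PP X) X (pr2 X \<circ>\<^sub>m idm (PP X)) b
       (mulE R X (pr2 X) (idm (PP X)) (unitf R X (pr2 X)) (embed R (PP X) (cpr R c t)))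
     = gmul R (PP X) (PP X) (idm (PP X)) (gmul R (PP X) X (pr2 X) b (unitf R X (pr2 X))) (embed R (PP X) (cpr R c t))"
    by (rule assoc1[OF gr PP_fin[OF fX] PP_fin[OF fX] fX idm_pmap pr2_pmap dom_idm dom_pr2 b unitf_pr2_Af[OF gr]
          embed_Af[OF gr cpr_car[OF gr c t]]])
  show ?thesis unfolding rl_inst[OF gr fX e d t] S2[symmetric] idm_cmap2 S4[OF gr c t, symmetric] S3[unfolded pr2_idm] ..
qed

theorem proposition4p1p3:
  fixes R :: "'a gring" and M :: "'a set"
  assumes "generalized_ring R"
    and "maximal_h_ideal R M"
  shows "prime_h_ideal R M"
proof -
  note gr = assms(1)
  have pM: "proper_h_ideal R M" and mx: "\<And>J. proper_h_ideal R J \<Longrightarrow> M \<subseteq> J \<Longrightarrow> J = M"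
    using assms(2) unfolding maximal_h_ideal_def by auto
  have hM: "h_ideal R M" and oM: "gone R \<notin> M" using pM unfolding proper_h_ideal_def by auto
  have Mc: "M \<subseteq> gcar R {1}" and Mcl: "\<And>X b d c. finite X \<Longrightarrow> b \<in> gcar R X \<Longrightarrow> d \<in> gcar R X \<Longrightarrow> (\<forall>x\<in>X. c x \<in> M) \<Longrightarrow>
        gcon R X {1} (cmap X) (gmul R X X (idm X) b (embed R X c)) (ofX d) \<in> M"
    using hM unfolding h_ideal_def by auto
  have mulM: "mul1 R m t \<in> M" if m: "m \<in> M" and t: "t \<in> gcar R {1}" for m t
  proof -
    have mc: "m \<in> gcar R {1}" using m Mc by blast
    have "gcon R {1} {1} (cmap {1}) (gmul R {1} {1} (idm {1}) (gone R) (embed R {1} (\<lambda>_. m))) (ofX (phi R t)) \<in> M"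
      by (rule Mcl) (auto simp: gone_car[OF gr] phi_car[OF gr t] m)
    then show ?thesis unfolding embed1[OF mc gr_F[OF gr]] mul1_eq[OF gr mc, symmetric] mul1_one_left[OF gr mc] cmap1
      mul1_as_con[OF gr mc t] .
  qed
  show ?thesis unfolding prime_h_ideal_def
  proof (intro conjI ballI impI pM)
    fix a b assume a: "a \<in> gcar R {1}" and b: "b \<in> gcar R {1}" and ab: "mul1 R a b \<in> M"
    show "a \<in> M \<or> b \<in> M"
    proof (rule disjCI)
      assume bM: "b \<notin> M"
      define J where "J = {x \<in> gcar R {1}. mul1 R x b \<in> M}"
      have hJ: "h_ideal R J" unfolding h_ideal_def
      proof (intro conjI allI impI)
        show "J \<subseteq> gcar R {1}" unfolding J_def by blast
        fix X \<beta> d c assume H: "finite X \<and> \<beta> \<in> gcar R X \<and> d \<in> gcar R X \<and> (\<forall>x\<in>X. c x \<in> J)"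
        then have fX: "finite X" and be: "\<beta> \<in> gcar R X" and d: "d \<in> gcar R X" and cJ: "\<forall>x\<in>X. c x \<in> J" by auto
        have c: "\<forall>x\<in>X. c x \<in> gcar R {1}" using cJ unfolding J_def by blast
        have e: "gmul R X X (idm X) \<beta> (embed R X c) \<in> gcar R X"
          by (rule gmul_car[OF gr fX fX idm_pmap be embed_Af[OF gr c]])
        have sc: "gcon R X {1} (cmap X) (gmul R X X (idm X) \<beta> (embed R X c)) (ofX d) \<in> gcar R {1}"
          by (rule gcon_car[OF gr fX _ cmap_pmap e]) (auto intro!: ofX_Af simp: fib_cmap1 d)
        have b': "gmul R (PP X) X (pr2 X) \<beta> (unitf R X (pr2 X)) \<in> gcar R (PP X)"
          by (rule gmul_car[OF gr PP_fin[OF fX] fX pr2_pmap be unitf_pr2_Af[OF gr]])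
        have d': "gmap R X (PP X) (tau X) d \<in> gcar R (PP X)"
          by (rule gmap_car[OF gr fX PP_fin[OF fX] tau_pbij d])
        have cM: "\<forall>p\<in>PP X. cpr R c b p \<in> M"
          using cJ unfolding J_def by (auto simp: PP_def cpr_def pe_dec)
        have "mul1 R (gcon R X {1} (cmap X) (gmul R X X (idm X) \<beta> (embed R X c)) (ofX d)) b \<in> M"
          unfolding key[OF gr fX be d c b] by (rule Mcl[OF PP_fin[OF fX] b' d' cM])
        then show "gcon R X {1} (cmap X) (gmul R X X (idm X) \<beta> (embed R X c)) (ofX d) \<in> J"
          using sc unfolding J_def by blast
      qed
      have oJ: "gone R \<notin> J" using bM mul1_one_left[OF gr b] unfolding J_def by auto
      have MJ: "M \<subseteq> J" using Mc mulM[OF _ b] unfolding J_def by blast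
      have "J = M" by (rule mx) (auto simp: proper_h_ideal_def hJ oJ MJ)
      moreover have "a \<in> J" using a ab unfolding J_def by blast
      ultimately show "a \<in> M" by simp
    qed
  qed
qed

end
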